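(* Let $L$ be an admissible multigraph. Then every vertex of $L$ has odd degree, and this degree is greater than one.
   Context: Multigraphs may have multiple edges and loops. A trail is a sequence $v_0,e_1,v_1,\ldots,e_k,v_k$ with $e_i$ an edge joining $v_{i-1}$ and $v_i$ and no edge repeated; its length is $k$. A trail spans $L$ if every vertex of $L$ lies on it. $t(L)$ denotes the length of a longest trail in $L$. A multigraph $L$ is admissible if (A-1) $t(L)<|E(L)|$, and (A-2) for each vertex $v\in V(L)$ and each edge $e$ incident with $v$, there is a trail of length $t(L)$ beginning $v,e,\ldots$ which spans $L$. *)

theory Defs
  imports Main
begin

text \<open>A finite multigraph (multiple edges and loops allowed) is given by a vertex set V,
an edge set E and a map ends assigning to each edge its two (unordered) endpoints,
given as a pair; a loop has equal endpoints.\<close>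

definition multigraph :: "'v set \<Rightarrow> 'e set \<Rightarrow> ('e \<Rightarrow> 'v \<times> 'v) \<Rightarrow> bool" where
  "multigraph V E ends \<longleftrightarrow> finite V \<and> finite E \<and>
     (\<forall>e\<in>E. fst (ends e) \<in> V \<and> snd (ends e) \<in> V)"

definition joins :: "('e \<Rightarrow> 'v \<times> 'v) \<Rightarrow> 'e \<Rightarrow> 'v \<Rightarrow> 'v \<Rightarrow> bool" where
  "joins ends e u w \<longleftrightarrow> ends e = (u, w) \<or> ends e = (w, u)"

definition incident :: "('e \<Rightarrow> 'v \<times> 'v) \<Rightarrow> 'e \<Rightarrow> 'v \<Rightarrow> bool" where
  "incident ends e v \<longleftrightarrow> fst (ends e) = v \<or> snd (ends e) = v"

text \<open>Degree: loops count twice.\<close>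
definition degree :: "'e set \<Rightarrow> ('e \<Rightarrow> 'v \<times> 'v) \<Rightarrow> 'v \<Rightarrow> nat" where
  "degree E ends v = card {e\<in>E. fst (ends e) = v} + card {e\<in>E. snd (ends e) = v}"

definition trail :: "'v set \<Rightarrow> 'e set \<Rightarrow> ('e \<Rightarrow> 'v \<times> 'v) \<Rightarrow> 'v list \<Rightarrow> 'e list \<Rightarrow> bool" where
  "trail V E ends vs es \<longleftrightarrow> length vs = Suc (length es) \<and> set vs \<subseteq> V \<and>
     set es \<subseteq> E \<and> distinct es \<and>
     (\<forall>i<length es. joins ends (es ! i) (vs ! i) (vs ! Suc i))"

definition spans :: "'v set \<Rightarrow> 'v list \<Rightarrow> bool" where
  "spans V vs \<longleftrightarrow> V \<subseteq> set vs"

definition longest_trail :: "'v set \<Rightarrow> 'e set \<Rightarrow> ('e \<Rightarrow> 'v \<times> 'v) \<Rightarrow> nat" where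
  "longest_trail V E ends = Max {length es | vs es. trail V E ends vs es}"

definition admissible :: "'v set \<Rightarrow> 'e set \<Rightarrow> ('e \<Rightarrow> 'v \<times> 'v) \<Rightarrow> bool" where
  "admissible V E ends \<longleftrightarrow>
     longest_trail V E ends < card E \<and>
     (\<forall>v\<in>V. \<forall>e\<in>E. incident ends e v \<longrightarrow>
        (\<exists>vs es. trail V E ends vs es \<and> length es = longest_trail V E ends \<and>
                 spans V vs \<and> es \<noteq> [] \<and> vs ! 0 = v \<and> es ! 0 = e))"

end

theory Submission
  imports Defs
begin

lemma trail_len_le:
  assumes "multigraph V E ends" "trail V E ends vs es"
  shows "length es \<le> longest_trail V E ends"
proof -
  have fin: "finite E" using assms(1) by (simp add: multigraph_def)
  have b: "length es' \<le> card E" if "trail V E ends vs' es'" for vs' es'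
  proof -
    have "length es' = card (set es')" using that by (simp add: trail_def distinct_card)
    also have "\<dots> \<le> card E" using that fin by (intro card_mono) (auto simp: trail_def)
    finally show ?thesis .
  qed
  have "finite {length es | vs es. trail V E ends vs es}"
    by (rule finite_subset[of _ "{..card E}"]) (auto dest: b)
  then show ?thesis unfolding longest_trail_def using assms(2) by (intro Max_ge) auto
qed

lemma trail_append:
  assumes "trail V E ends vs es" "f \<in> E" "f \<notin> set es" "joins ends f (vs ! length es) y" "y \<in> V"
  shows "trail V E ends (vs @ [y]) (es @ [f])"
  unfolding trail_def
proof (intro conjI allI impI)
  fix i assume i: "i < length (es @ [f])"
  show "joins ends ((es @ [f]) ! i) ((vs @ [y]) ! i) ((vs @ [y]) ! Suc i)"
  proof (cases "i < length es")
    case True then show ?thesis using assms(1) by (auto simp: trail_def nth_append)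
  next
    case False then have "i = length es" using i by simp
    then show ?thesis using assms(1,4) by (auto simp: trail_def nth_append)
  qed
qed (use assms in \<open>auto simp: trail_def\<close>)

lemma joins_sym: "joins ends e u w = joins ends e w u" by (auto simp: joins_def)

lemma trail_rev:
  assumes "trail V E ends vs es"
  shows "trail V E ends (rev vs) (rev es)"
  unfolding trail_def
proof (intro conjI allI impI)
  fix i assume i: "i < length (rev es)"
  let ?n = "length es"
  have l: "length vs = Suc ?n" using assms by (simp add: trail_def)
  have j: "joins ends (es ! (?n - Suc i)) (vs ! (?n - Suc i)) (vs ! Suc (?n - Suc i))"
    using assms i by (auto simp: trail_def)
  have "Suc (?n - Suc i) = ?n - i" using i by simp
  then show "joins ends (rev es ! i) (rev vs ! i) (rev vs ! Suc i)"
    using j i l by (simp add: rev_nth joins_sym)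
qed (use assms in \<open>auto simp: trail_def\<close>)

lemma trail_rotate:
  assumes "trail V E ends vs es" "vs ! 0 = vs ! length es" "k < length es"
  shows "trail V E ends (rotate k (butlast vs) @ [vs ! k]) (rotate k es)
         \<and> (rotate k (butlast vs) @ [vs ! k]) ! length es = vs ! k"
proof -
  let ?n = "length es"
  let ?w = "rotate k (butlast vs) @ [vs ! k]"
  have l: "length vs = Suc ?n" using assms by (simp add: trail_def)
  have lb: "length (butlast vs) = ?n" using l by simp
  have w: "?w ! i = vs ! ((k + i) mod ?n)" if "i \<le> ?n" for i
  proof (cases "i < ?n")
    case True
    have "(k + i) mod ?n < ?n" using assms(3) by (intro mod_less_divisor) auto
    then show ?thesis using lb True by (simp add: nth_append nth_rotate nth_butlast)
  next
    case False then have "i = ?n" using that by simp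
    then show ?thesis using lb assms(3) by (simp add: nth_append)
  qed
  have nxt: "vs ! ((k + Suc i) mod ?n) = vs ! Suc ((k + i) mod ?n)" for i
  proof -
    have "(k + Suc i) mod ?n = (if Suc ((k + i) mod ?n) = ?n then 0 else Suc ((k + i) mod ?n))"
      using mod_Suc[of "k+i" ?n] by simp
    then show ?thesis using assms(2) by auto
  qed
  have "trail V E ends ?w (rotate k es)"
    unfolding trail_def
  proof (intro conjI allI impI)
    fix i assume i: "i < length (rotate k es)"
    then have i': "i < ?n" by simp
    have pos: "0 < ?n" using assms(3) by linarith
    have "(k + i) mod ?n < ?n" using pos by (intro mod_less_divisor)
    have "joins ends (es ! ((k + i) mod ?n)) (vs ! ((k + i) mod ?n)) (vs ! Suc ((k + i) mod ?n))"
      using assms(1) \<open>(k + i) mod ?n < ?n\<close> by (auto simp: trail_def)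
    then show "joins ends (rotate k es ! i) (?w ! i) (?w ! Suc i)"
      using i' w[of i] w[of "Suc i"] nxt[of i] by (simp add: nth_rotate)
  next
    show "set ?w \<subseteq> V" using assms(1,3) l
      by (auto simp: trail_def dest: in_set_butlastD)
  qed (use assms lb in \<open>auto simp: trail_def\<close>)
  moreover have "?w ! ?n = vs ! k" using lb by (simp add: nth_append)
  ultimately show ?thesis by simp
qed

definition cnt :: "('e \<Rightarrow> 'v \<times> 'v) \<Rightarrow> 'v \<Rightarrow> 'e list \<Rightarrow> nat" where
  "cnt ends v xs = sum_list (map (\<lambda>e. (if fst (ends e) = v then 1 else 0) + (if snd (ends e) = v then 1 else 0)) xs)"

lemma parity:
  assumes "trail V E ends vs es" "m \<le> length es"
  shows "even (cnt ends v (take m es) + (if vs ! 0 = v then 1 else 0) + (if vs ! m = v then 1 else 0))"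
  using assms(2)
proof (induction m)
  case 0 then show ?case by (simp add: cnt_def)
next
  case (Suc m)
  then have m: "m < length es" by simp
  have j: "joins ends (es ! m) (vs ! m) (vs ! Suc m)" using assms(1) m by (auto simp: trail_def)
  have t: "take (Suc m) es = take m es @ [es ! m]" using m by (simp add: take_Suc_conv_app_nth)
  have g: "(if fst (ends (es ! m)) = v then 1 else 0) + (if snd (ends (es ! m)) = v then 1 else 0)
       = (if vs ! m = v then 1 else 0) + (if vs ! Suc m = v then (1::nat) else 0)"
    using j by (cases "ends (es ! m)") (auto simp: joins_def)
  have "cnt ends v (take (Suc m) es) = cnt ends v (take m es)
       + ((if vs ! m = v then 1 else 0) + (if vs ! Suc m = v then (1::nat) else 0))"
    using g by (simp add: t cnt_def)
  moreover have "even (cnt ends v (take m es) + (if vs ! 0 = v then 1 else 0) + (if vs ! m = v then 1 else 0))"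
    using Suc.IH m by simp
  ultimately show ?case by (simp split: if_splits)
qed

lemma cnt_card:
  assumes "distinct es"
  shows "cnt ends v es = card {e \<in> set es. fst (ends e) = v} + card {e \<in> set es. snd (ends e) = v}"
proof -
  have "cnt ends v es = (\<Sum>e\<in>set es. (if fst (ends e) = v then 1 else 0) + (if snd (ends e) = v then 1 else (0::nat)))"
    using assms by (simp add: cnt_def sum_list_distinct_conv_sum_set)
  also have "\<dots> = (\<Sum>e\<in>set es. (if fst (ends e) = v then 1 else (0::nat))) + (\<Sum>e\<in>set es. (if snd (ends e) = v then 1 else (0::nat)))"
    by (simp add: sum.distrib)
  also have "\<dots> = card {e \<in> set es. fst (ends e) = v} + card {e \<in> set es. snd (ends e) = v}"
    by (simp add: sum.If_cases Int_def)
  finally show ?thesis .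
qed


lemma end_all:
  assumes mg: "multigraph V E ends" and tr: "trail V E ends ws fs"
    and len: "length fs = longest_trail V E ends"
    and f: "f \<in> E" "incident ends f (ws ! length fs)"
  shows "f \<in> set fs"
proof (rule ccontr)
  assume nf: "f \<notin> set fs"
  define y where "y = (if fst (ends f) = ws ! length fs then snd (ends f) else fst (ends f))"
  have j: "joins ends f (ws ! length fs) y"
    using f(2) by (cases "ends f") (auto simp: y_def joins_def incident_def)
  have y: "y \<in> V" using mg f(1) by (auto simp: y_def multigraph_def)
  have "trail V E ends (ws @ [y]) (fs @ [f])" by (rule trail_append[OF tr f(1) nf j y])
  from trail_len_le[OF mg this] len show False by simp
qed

theorem lemma2p6:
  fixes V :: "'v set" and E :: "'e set" and ends :: "'e \<Rightarrow> 'v \<times> 'v"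
  assumes "multigraph V E ends"
    and "admissible V E ends"
    and "v \<in> V"
  shows "odd (degree E ends v) \<and> degree E ends v > 1"
proof -
  note mg = assms(1)
  let ?t = "longest_trail V E ends"
  have finE: "finite E" using mg by (simp add: multigraph_def)
  have tlt: "?t < card E" using assms(2) by (simp add: admissible_def)
  have adm: "\<And>u e. u \<in> V \<Longrightarrow> e \<in> E \<Longrightarrow> incident ends e u \<Longrightarrow>
        (\<exists>vs es. trail V E ends vs es \<and> length es = ?t \<and>
                 spans V vs \<and> es \<noteq> [] \<and> vs ! 0 = u \<and> es ! 0 = e)"
    using assms(2) by (simp add: admissible_def)
  have endsV: "\<And>f. f \<in> E \<Longrightarrow> fst (ends f) \<in> V \<and> snd (ends f) \<in> V"
    using mg by (simp add: multigraph_def)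
  have "E \<noteq> {}" using tlt by auto
  then obtain e0 where e0: "e0 \<in> E" by blast
  have "incident ends e0 (fst (ends e0))" by (simp add: incident_def)
  then obtain vs0 es0 where T0: "trail V E ends vs0 es0" "spans V vs0" "es0 \<noteq> []"
    using adm[OF _ e0] endsV[OF e0] by blast
  have "v \<in> set vs0" using T0(2) assms(3) by (auto simp: spans_def)
  then obtain k where k: "k < length vs0" "vs0 ! k = v" by (auto simp: in_set_conv_nth)
  have lvs0: "length vs0 = Suc (length es0)" using T0(1) by (simp add: trail_def)
  obtain e where e: "e \<in> E" "incident ends e v"
  proof (cases "k < length es0")
    case True
    then have "joins ends (es0 ! k) (vs0 ! k) (vs0 ! Suc k)" "es0 ! k \<in> E"
      using T0(1) by (auto simp: trail_def)
    then show ?thesis using that k by (auto simp: joins_def incident_def)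
  next
    case False
    have kn: "k = length es0" using False k(1) lvs0 by simp
    have "length es0 \<noteq> 0" using T0(3) by simp
    then have kk: "k = Suc (k - 1)" "k - 1 < length es0" using kn by arith+
    then have "joins ends (es0 ! (k-1)) (vs0 ! (k-1)) (vs0 ! Suc (k-1))" "es0 ! (k-1) \<in> E"
      using T0(1) by (auto simp: trail_def)
    then show ?thesis using that k kk(1) by (auto simp: joins_def incident_def)
  qed
  obtain vs es where T: "trail V E ends vs es" "length es = ?t" "spans V vs" "es \<noteq> []"
     "vs ! 0 = v" "es ! 0 = e"
    using adm[OF assms(3) e] by blast
  let ?n = "length es"
  have lvs: "length vs = Suc ?n" using T(1) by (simp add: trail_def)
  have dist: "distinct es" and esE: "set es \<subseteq> E" using T(1) by (auto simp: trail_def)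
  have rv: "rev vs ! length (rev es) = vs ! 0" using lvs by (simp add: rev_nth)
  have startall: "f \<in> set es" if "f \<in> E" "incident ends f v" for f
    using end_all[OF mg trail_rev[OF T(1)] _ that(1)] T(2,5) rv that(2) by simp
  have ne: "vs ! 0 \<noteq> vs ! ?n"
  proof
    assume cl: "vs ! 0 = vs ! ?n"
    have "\<not> E \<subseteq> set es"
    proof
      assume "E \<subseteq> set es"
      then have "card E \<le> card (set es)" by (intro card_mono) auto
      then show False using tlt T(2) dist by (simp add: distinct_card)
    qed
    then obtain f where f: "f \<in> E" "f \<notin> set es" by blast
    have "fst (ends f) \<in> set vs" using endsV[OF f(1)] T(3) by (auto simp: spans_def)
    then obtain j where j: "j < length vs" "vs ! j = fst (ends f)" by (auto simp: in_set_conv_nth)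
    define k where "k = (if j = ?n then 0 else j)"
    have k: "k < ?n" "vs ! k = fst (ends f)" using j lvs T(4) cl by (auto simp: k_def)
    have R: "trail V E ends (rotate k (butlast vs) @ [vs ! k]) (rotate k es)"
      "(rotate k (butlast vs) @ [vs ! k]) ! length (rotate k es) = vs ! k"
      using trail_rotate[OF T(1) cl k(1)] by auto
    have "trail V E ends ((rotate k (butlast vs) @ [vs ! k]) @ [snd (ends f)]) (rotate k es @ [f])"
      by (rule trail_append[OF R(1) f(1)]) (use f k R(2) endsV[OF f(1)] in \<open>auto simp: joins_def\<close>)
    from trail_len_le[OF mg this] T(2) show False by simp
  qed
  have "even (cnt ends v (take ?n es) + (if vs ! 0 = v then 1 else 0) + (if vs ! ?n = v then 1 else 0))"
    by (rule parity[OF T(1)]) simp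
  then have oddc: "odd (cnt ends v es)" using ne T(5) by simp
  have A: "{f \<in> set es. fst (ends f) = v} = {f \<in> E. fst (ends f) = v}"
    using esE startall by (auto simp: incident_def)
  have B: "{f \<in> set es. snd (ends f) = v} = {f \<in> E. snd (ends f) = v}"
    using esE startall by (auto simp: incident_def)
  have odd_deg: "odd (degree E ends v)"
    using oddc cnt_card[OF dist, of ends v] A B by (simp add: degree_def)
  have "degree E ends v \<noteq> 1"
  proof
    assume d1: "degree E ends v = 1"
    let ?A = "{f \<in> E. fst (ends f) = v}" and ?B = "{f \<in> E. snd (ends f) = v}"
    have fA: "finite ?A" "finite ?B" using finE by auto
    have "(card ?A = 0 \<and> card ?B = 1) \<or> (card ?A = 1 \<and> card ?B = 0)"
      using d1 by (simp add: degree_def) arith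
    then have "\<exists>g. ?A \<union> ?B = {g} \<and> ?A \<inter> ?B = {}"
      using fA by (auto simp: card_1_singleton_iff)
    then obtain g where g: "?A \<union> ?B = {g}" "?A \<inter> ?B = {}" by blast
    have only: "f = e" if "f \<in> E" "incident ends f v" for f
    proof -
      have "f \<in> ?A \<union> ?B" "e \<in> ?A \<union> ?B" using that e by (auto simp: incident_def)
      then show ?thesis using g(1) by auto
    qed
    have notloop: "\<not> (fst (ends e) = v \<and> snd (ends e) = v)" using g(2) e(1) by auto
    define u where "u = (if fst (ends e) = v then snd (ends e) else fst (ends e))"
    have uv: "u \<noteq> v" using notloop e(2) by (auto simp: u_def incident_def)
    have ev: "ends e = (v, u) \<or> ends e = (u, v)"
      using e(2) by (cases "ends e") (auto simp: u_def incident_def)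
    have uV: "u \<in> V" using endsV[OF e(1)] by (auto simp: u_def)
    have "incident ends e u" using ev by (auto simp: incident_def)
    then obtain ws fs where W: "trail V E ends ws fs" "length fs = ?t" "spans V ws" "fs \<noteq> []"
      "ws ! 0 = u" "fs ! 0 = e"
      using adm[OF uV e(1)] by blast
    have lws: "length ws = Suc (length fs)" using W(1) by (simp add: trail_def)
    have "joins ends (fs ! 0) (ws ! 0) (ws ! 1)" using W(1,4) by (auto simp: trail_def)
    then have w1: "ws ! 1 = v" using W(5,6) ev uv by (auto simp: joins_def)
    have lf1: "length fs = 1"
    proof (rule ccontr)
      assume "length fs \<noteq> 1"
      then have l2: "1 < length fs" using W(4) by (cases fs) auto
      then have "joins ends (fs ! 1) (ws ! 1) (ws ! Suc 1)" "fs ! 1 \<in> E" using W(1) by (auto simp: trail_def)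
      then have "fs ! 1 = e" using only w1 by (auto simp: joins_def incident_def)
      moreover have "distinct fs" using W(1) by (simp add: trail_def)
      ultimately show False using W(6) l2 nth_eq_iff_index_eq[of fs 1 0] by (cases fs) auto
    qed
    have "set ws = {ws ! 0, ws ! 1}" using lws lf1
      by (cases ws; cases "tl ws"; auto)
    then have Vuv: "V \<subseteq> {u, v}" using W(3,5) w1 by (auto simp: spans_def)
    have "\<not> E \<subseteq> {e}"
    proof
      assume "E \<subseteq> {e}"
      then have "card E \<le> 1" using card_mono[of "{e}" E] by simp
      then show False using tlt W(2) lf1 by simp
    qed
    then obtain f where f: "f \<in> E" "f \<noteq> e" by blast
    have fu: "ends f = (u, u)"
      using endsV[OF f(1)] Vuv only[OF f(1)] f(2) by (cases "ends f") (auto simp: incident_def)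
    have T1: "trail V E ends [v, u] [e]"
      using e(1) assms(3) uV ev by (auto simp: trail_def joins_def)
    have "trail V E ends ([v, u] @ [u]) ([e] @ [f])"
      by (rule trail_append[OF T1 f(1)]) (use f fu uV in \<open>auto simp: joins_def\<close>)
    from trail_len_le[OF mg this] W(2) lf1 show False by simp
  qed
  with odd_deg show ?thesis by (cases "degree E ends v") auto
qed

end
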